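(* There exist finite-dimensional Hilbert spaces $\mathcal{H}_1,\mathcal{H}_2$, states $\rho_1$ on $\mathcal{H}_1$ and $\rho_2$ on $\mathcal{H}_2$, a separable observable $A$ on $\mathcal{H}_1\otimes\mathcal{H}_2$, an entangled state $\rho$ on $\mathcal{H}_1\otimes\mathcal{H}_2$, and a real number $\lambda>0$ such that: (1) $\rho$ is a witness of the $\lambda$-lifting $\rho_1\,A^\#\,\rho_2$; and (2) no separable state $\sigma$ on $\mathcal{H}_1\otimes\mathcal{H}_2$ is a witness of the $\lambda$-lifting $\rho_1\,A^\#\,\rho_2$.
   Context: $\rho\in\mathcal{D}^\le(\mathcal{H}_1\otimes\mathcal{H}_2)$ (partial density operators) is a coupling for $\langle\rho_1,\rho_2\rangle$ if $\mathrm{tr}_2(\rho)=\rho_1$ and $\mathrm{tr}_1(\rho)=\rho_2$ (partial traces). For an observable (Hermitian operator) $A$ on $\mathcal{H}_1\otimes\mathcal{H}_2$ and $\lambda>0$, $\rho$ is a witness of the $\lambda$-lifting $\rho_1 A^\#\rho_2$ if $\rho$ is a coupling for $\langle\rho_1,\rho_2\rangle$ and $\mathrm{tr}(A\rho)\ge\lambda$. A positive operator $\rho$ on $\mathcal{H}_1\otimes\mathcal{H}_2$ is separable if $\rho=\sum_m\rho_{m1}\otimes\rho_{m2}$ with each $\rho_{mi}$ a positive operator on $\mathcal{H}_i$; it is entangled if it is not separable. *)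

theory Defs
  imports Complex_Main "Jordan_Normal_Form.Matrix"
begin

text \<open>Finite-dimensional Hilbert spaces are modelled as C^n; operators are n x n complex
matrices. The composite space H1 (x) H2 = C^(n1*n2) with basis index i1*n2 + i2.\<close>

definition cpositive :: "nat \<Rightarrow> complex mat \<Rightarrow> bool" where
  "cpositive n A \<longleftrightarrow> A \<in> carrier_mat n n \<and>
     (\<forall>v \<in> carrier_vec n.
        let q = (\<Sum>i<n. cnj (v $ i) * (A *\<^sub>v v) $ i) in Im q = 0 \<and> Re q \<ge> 0)"

definition hermitian_op :: "nat \<Rightarrow> complex mat \<Rightarrow> bool" where
  "hermitian_op n A \<longleftrightarrow> A \<in> carrier_mat n n \<and>
     (\<forall>i<n. \<forall>j<n. A $$ (i, j) = cnj (A $$ (j, i)))"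

definition trace :: "complex mat \<Rightarrow> complex" where
  "trace A = (\<Sum>i<dim_row A. A $$ (i, i))"

definition is_state :: "nat \<Rightarrow> complex mat \<Rightarrow> bool" where
  "is_state n \<rho> \<longleftrightarrow> cpositive n \<rho> \<and> trace \<rho> = 1"

definition is_pdo :: "nat \<Rightarrow> complex mat \<Rightarrow> bool" where
  "is_pdo n \<rho> \<longleftrightarrow> cpositive n \<rho> \<and> Re (trace \<rho>) \<le> 1"

definition kron :: "nat \<Rightarrow> nat \<Rightarrow> complex mat \<Rightarrow> complex mat \<Rightarrow> complex mat" where
  "kron n1 n2 A B = mat (n1 * n2) (n1 * n2)
     (\<lambda>(i, j). A $$ (i div n2, j div n2) * B $$ (i mod n2, j mod n2))"

definition ptrace2 :: "nat \<Rightarrow> nat \<Rightarrow> complex mat \<Rightarrow> complex mat" where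
  "ptrace2 n1 n2 \<rho> = mat n1 n1 (\<lambda>(i, j). \<Sum>k<n2. \<rho> $$ (i * n2 + k, j * n2 + k))"

definition ptrace1 :: "nat \<Rightarrow> nat \<Rightarrow> complex mat \<Rightarrow> complex mat" where
  "ptrace1 n1 n2 \<rho> = mat n2 n2 (\<lambda>(k, l). \<Sum>i<n1. \<rho> $$ (i * n2 + k, i * n2 + l))"

definition separable :: "nat \<Rightarrow> nat \<Rightarrow> complex mat \<Rightarrow> bool" where
  "separable n1 n2 \<rho> \<longleftrightarrow> cpositive (n1 * n2) \<rho> \<and>
     (\<exists>(K::nat) P Q. (\<forall>m<K. cpositive n1 (P m) \<and> cpositive n2 (Q m)) \<and>
        \<rho> = mat (n1 * n2) (n1 * n2) (\<lambda>ij. \<Sum>m<K. kron n1 n2 (P m) (Q m) $$ ij))"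

definition entangled :: "nat \<Rightarrow> nat \<Rightarrow> complex mat \<Rightarrow> bool" where
  "entangled n1 n2 \<rho> \<longleftrightarrow> cpositive (n1 * n2) \<rho> \<and> \<not> separable n1 n2 \<rho>"

definition coupling :: "nat \<Rightarrow> nat \<Rightarrow> complex mat \<Rightarrow> complex mat \<Rightarrow> complex mat \<Rightarrow> bool" where
  "coupling n1 n2 \<rho> \<rho>1 \<rho>2 \<longleftrightarrow> is_pdo (n1 * n2) \<rho> \<and>
     ptrace2 n1 n2 \<rho> = \<rho>1 \<and> ptrace1 n1 n2 \<rho> = \<rho>2"

definition lifting_witness :: "nat \<Rightarrow> nat \<Rightarrow> complex mat \<Rightarrow> complex mat \<Rightarrow> complex mat
    \<Rightarrow> real \<Rightarrow> complex mat \<Rightarrow> bool" where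
  "lifting_witness n1 n2 \<rho>1 A \<rho>2 lam \<rho> \<longleftrightarrow>
     coupling n1 n2 \<rho> \<rho>1 \<rho>2 \<and> Re (trace (A * \<rho>)) \<ge> lam"

end

theory Submission
  imports Defs
begin

lemma sum4: "(\<Sum>i<4. f i) = f 0 + f 1 + f (2::nat) + f 3"
  by (simp add: numeral_eq_Suc lessThan_Suc add_ac)

lemma sum2: "(\<Sum>i<2. f i) = f 0 + f (1::nat)"
  by (simp add: numeral_eq_Suc lessThan_Suc add_ac)

lemma sum2': "(\<Sum>i=0..<2. f i) = f 0 + f (1::nat)"
  by (simp add: numeral_eq_Suc atLeast0LessThan lessThan_Suc add_ac)

lemma sum4': "(\<Sum>i=0..<4. f i) = f 0 + f 1 + f (2::nat) + f 3"
  by (simp add: numeral_eq_Suc atLeast0LessThan lessThan_Suc add_ac)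

lemma less4: "(i::nat) < 4 \<longleftrightarrow> i = 0 \<or> i = 1 \<or> i = 2 \<or> i = 3" by auto
lemma less2: "(i::nat) < 2 \<longleftrightarrow> i = 0 \<or> i = 1" by auto

lemma pos2_form:
  assumes "cpositive 2 P" 
  shows "Im (cnj s * (P $$ (0,0) * s + P $$ (0,1) * t) + cnj t * (P $$ (1,0) * s + P $$ (1,1) * t)) = 0 \<and>
         Re (cnj s * (P $$ (0,0) * s + P $$ (0,1) * t) + cnj t * (P $$ (1,0) * s + P $$ (1,1) * t)) \<ge> 0"
proof -
  have c: "P \<in> carrier_mat 2 2" using assms unfolding cpositive_def by auto
  define v :: "complex vec" where "v = vec 2 (\<lambda>i. if i = 0 then s else t)"
  have "v \<in> carrier_vec 2" unfolding v_def by simp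
  then have h: "Im (\<Sum>i<2. cnj (v $ i) * (P *\<^sub>v v) $ i) = 0 \<and> Re (\<Sum>i<2. cnj (v $ i) * (P *\<^sub>v v) $ i) \<ge> 0"
    using assms unfolding cpositive_def Let_def by blast
  have e: "(\<Sum>i<2. cnj (v $ i) * (P *\<^sub>v v) $ i) = cnj s * (P $$ (0,0) * s + P $$ (0,1) * t) + cnj t * (P $$ (1,0) * s + P $$ (1,1) * t)"
    using c unfolding v_def by (simp add: sum2 sum2' mult_mat_vec_def scalar_prod_def row_def)
  show ?thesis using h e by simp
qed

lemma disc:
  fixes a b u :: real
  assumes "\<And>s t. s^2 * a + s * t * u + t^2 * b \<ge> 0"
  shows "u^2 \<le> 4 * a * b" "a \<ge> 0" "b \<ge> 0"
proof -
  have a: "a \<ge> 0" using assms[of 1 0] by simp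
  have b: "b \<ge> 0" using assms[of 0 1] by simp
  have 1: "a * (4*a*b - u^2) \<ge> 0" using assms[of "-u" "2*a"] by (simp add: algebra_simps power2_eq_square)
  have 2: "b * (4*a*b - u^2) \<ge> 0" using assms[of "2*b" "-u"] by (simp add: algebra_simps power2_eq_square)
  have 3: "u^2*a + b - u^2 \<ge> 0" using assms[of "-u" "1"] by (simp add: algebra_simps power2_eq_square)
  show "u^2 \<le> 4 * a * b"
  proof (cases "a = 0 \<and> b = 0")
    case True then show ?thesis using 3 by simp
  next
    case False
    then have "a > 0 \<or> b > 0" using a b by auto
    then show ?thesis using 1 2 by (meson diff_ge_0_iff_ge zero_le_mult_iff not_le)
  qed
  show "a \<ge> 0" "b \<ge> 0" using a b by auto
qed

lemma pos2_facts:
  assumes "cpositive 2 P"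
  shows "Im (P $$ (0,0)) = 0" "Im (P $$ (1,1)) = 0" "Im (P $$ (0,1) + P $$ (1,0)) = 0"
    "Re (P $$ (0,0)) \<ge> 0" "Re (P $$ (1,1)) \<ge> 0"
    "(Re (P $$ (0,1) + P $$ (1,0)))^2 \<le> 4 * Re (P $$ (0,0)) * Re (P $$ (1,1))"
proof -
  note f = pos2_form[OF assms]
  show "Im (P $$ (0,0)) = 0" using f[of 1 0] by simp
  show "Im (P $$ (1,1)) = 0" using f[of 0 1] by simp
  have "Im (P $$ (0,0) + P $$ (0,1) + P $$ (1,0) + P $$ (1,1)) = 0" using f[of 1 1] by simp
  then show "Im (P $$ (0,1) + P $$ (1,0)) = 0" using f[of 1 0] f[of 0 1] by simp
  have q: "\<And>s t. s^2 * Re (P $$ (0,0)) + s * t * Re (P $$ (0,1) + P $$ (1,0)) + t^2 * Re (P $$ (1,1)) \<ge> 0"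
  proof -
    fix s t :: real
    have "Re (cnj (complex_of_real s) * (P $$ (0,0) * complex_of_real s + P $$ (0,1) * complex_of_real t) + cnj (complex_of_real t) * (P $$ (1,0) * complex_of_real s + P $$ (1,1) * complex_of_real t)) \<ge> 0"
      using f by blast
    then show "s^2 * Re (P $$ (0,0)) + s * t * Re (P $$ (0,1) + P $$ (1,0)) + t^2 * Re (P $$ (1,1)) \<ge> 0"
      by (simp add: algebra_simps power2_eq_square)
  qed
  show "(Re (P $$ (0,1) + P $$ (1,0)))^2 \<le> 4 * Re (P $$ (0,0)) * Re (P $$ (1,1))"
    "Re (P $$ (0,0)) \<ge> 0" "Re (P $$ (1,1)) \<ge> 0" using disc[OF q] by auto
qed

definition g :: "complex mat \<Rightarrow> complex mat \<Rightarrow> complex" where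
  "g P Q = 3/2 * (P $$ (0,0) * Q $$ (0,0) + P $$ (1,1) * Q $$ (1,1))
     + 1/2 * (P $$ (0,0) * Q $$ (1,1) + P $$ (1,1) * Q $$ (0,0))
     + 1/2 * ((P $$ (0,1) + P $$ (1,0)) * (Q $$ (0,1) + Q $$ (1,0)))"

lemma real_key:
  fixes p0 p1 q0 q1 u w :: real
  assumes "p0 \<ge> 0" "p1 \<ge> 0" "q0 \<ge> 0" "q1 \<ge> 0" "u^2 \<le> 4*p0*p1" "w^2 \<le> 4*q0*q1"
  shows "u * w \<le> 2 * (p0*q1 + p1*q0)"
proof -
  have "u^2 * w^2 \<le> (4*p0*p1) * (4*q0*q1)"
    by (rule mult_mono) (use assms in auto)
  then have "(u*w)^2 \<le> (4*p0*p1) * (4*q0*q1)" by (simp add: power_mult_distrib)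
  also have "\<dots> \<le> (2 * (p0*q1 + p1*q0))^2"
  proof -
    have "0 \<le> (p0*q1 - p1*q0)^2" by simp
    then show ?thesis by (simp add: power2_eq_square algebra_simps)
  qed
  finally have "(u*w)^2 \<le> (2 * (p0*q1 + p1*q0))^2" .
  moreover have "0 \<le> 2 * (p0*q1 + p1*q0)" using assms by simp
  ultimately have "\<bar>u*w\<bar> \<le> 2 * (p0*q1 + p1*q0)" using abs_le_square_iff by (metis abs_of_nonneg)
  then show ?thesis by simp
qed

lemma re_g:
  assumes "Im a = 0" "Im b = 0" "Im u = 0" "Im c = 0" "Im d = 0" "Im w = 0"
  shows "Re (3/2 * (a * c + b * d) + 1/2 * (a * d + b * c) + 1/2 * (u * w)) =
    3/2 * (Re a * Re c + Re b * Re d) + 1/2 * (Re a * Re d + Re b * Re c) + 1/2 * (Re u * Re w)"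
proof -
  have r: "z = complex_of_real (Re z)" if "Im z = 0" for z using that by (simp add: complex_eq_iff)
  obtain ra rb ru rc rd rw where e: "a = of_real ra" "b = of_real rb" "u = of_real ru"
     "c = of_real rc" "d = of_real rd" "w = of_real rw" using r assms by metis
  have "3/2 * (a * c + b * d) + 1/2 * (a * d + b * c) + 1/2 * (u * w) =
     complex_of_real (3/2 * (ra * rc + rb * rd) + 1/2 * (ra * rd + rb * rc) + 1/2 * (ru * rw))"
    unfolding e by simp
  then show ?thesis unfolding e by simp
qed

lemma pm_bound:
  assumes "cpositive 2 P" "cpositive 2 Q"
  shows "Re (g P Q) \<le> 3/2 * Re ((P $$ (0,0) + P $$ (1,1)) * (Q $$ (0,0) + Q $$ (1,1)))"
proof -
  note fp = pos2_facts[OF assms(1)] and fq = pos2_facts[OF assms(2)]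
  have k: "Re (P $$ (0,1) + P $$ (1,0)) * Re (Q $$ (0,1) + Q $$ (1,0)) \<le>
     2 * (Re (P $$ (0,0)) * Re (Q $$ (1,1)) + Re (P $$ (1,1)) * Re (Q $$ (0,0)))"
    by (rule real_key) (use fp fq in auto)
  have "Re (g P Q) = 3/2 * (Re (P $$ (0,0)) * Re (Q $$ (0,0)) + Re (P $$ (1,1)) * Re (Q $$ (1,1)))
     + 1/2 * (Re (P $$ (0,0)) * Re (Q $$ (1,1)) + Re (P $$ (1,1)) * Re (Q $$ (0,0)))
     + 1/2 * (Re (P $$ (0,1) + P $$ (1,0)) * Re (Q $$ (0,1) + Q $$ (1,0)))"
    unfolding g_def by (rule re_g) (use fp(1-3) fq(1-3) in auto)
  moreover have "Re ((P $$ (0,0) + P $$ (1,1)) * (Q $$ (0,0) + Q $$ (1,1))) =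
     (Re (P $$ (0,0)) + Re (P $$ (1,1))) * (Re (Q $$ (0,0)) + Re (Q $$ (1,1)))"
    using fp(1-3) fq(1-3) by simp
  ultimately show ?thesis using k by (simp add: algebra_simps)
qed

definition pr :: "nat \<Rightarrow> complex mat" where
  "pr m = mat 2 2 (\<lambda>(i,j). if m = 0 then (if i = 0 \<and> j = 0 then 1 else 0)
     else if m = 1 then (if i = 1 \<and> j = 1 then 1 else 0)
     else if m = 2 then 1/2 else (if i = j then 1/2 else -1/2))"

definition Aop :: "complex mat" where
  "Aop = mat (2*2) (2*2) (\<lambda>ij. \<Sum>m<4. kron 2 2 (pr m) (pr m) $$ ij)"

lemma Aop_entry:
  assumes "i < 4" "j < 4"
  shows "Aop $$ (i,j) = (if i = j then (if i = 0 \<or> i = 3 then 3/2 else 1/2) else if i + j = 3 then 1/2 else 0)"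
  using assms unfolding less4
  by (elim disjE) (simp_all add: Aop_def kron_def pr_def sum4)

lemma Aop_carrier: "Aop \<in> carrier_mat 4 4" unfolding Aop_def by simp

lemma sep_bound:
  assumes "\<forall>m<K. cpositive 2 (P m) \<and> cpositive 2 (Q m)"
    and "\<sigma> = mat (2*2) (2*2) (\<lambda>ij. \<Sum>m<K. kron 2 2 (P m) (Q m) $$ ij)"
  shows "Re (trace (Aop * \<sigma>)) \<le> 3/2 * Re (trace \<sigma>)"
proof -
  have se: "\<sigma> $$ (i,j) = (\<Sum>m<K. P m $$ (i div 2, j div 2) * Q m $$ (i mod 2, j mod 2))"
    if "i < 4" "j < 4" for i j
    using that unfolding assms(2) kron_def by simp
  have dr: "dim_row \<sigma> = 4" "dim_col \<sigma> = 4" using assms(2) by auto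
  have t1a: "trace (Aop * \<sigma>) = 3/2*(\<sigma>$$(0,0)+\<sigma>$$(3,3)) + 1/2*(\<sigma>$$(1,1)+\<sigma>$$(2,2))
      + 1/2*(\<sigma>$$(3,0)+\<sigma>$$(0,3)+\<sigma>$$(2,1)+\<sigma>$$(1,2))"
    using Aop_carrier dr unfolding trace_def
    by (simp add: sum4 sum4' scalar_prod_def Aop_entry algebra_simps)
  have t1: "trace (Aop * \<sigma>) = (\<Sum>m<K. g (P m) (Q m))"
    unfolding t1a g_def by (simp add: se sum.distrib sum_distrib_left algebra_simps)
  have t2: "trace \<sigma> = (\<Sum>m<K. (P m $$ (0,0) + P m $$ (1,1)) * (Q m $$ (0,0) + Q m $$ (1,1)))"
    unfolding trace_def using dr
    by (simp add: sum4 se sum.distrib algebra_simps)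
  show ?thesis unfolding t1 t2 Re_sum sum_distrib_left
    by (rule sum_mono) (use assms(1) pm_bound in auto)
qed

lemma qf2:
  assumes "v \<in> carrier_vec 2" "P \<in> carrier_mat 2 2"
  shows "(\<Sum>i<2. cnj (v $ i) * (P *\<^sub>v v) $ i) =
    cnj (v$0) * (P$$(0,0) * v$0 + P$$(0,1) * v$1) + cnj (v$1) * (P$$(1,0) * v$0 + P$$(1,1) * v$1)"
  using assms by (simp add: sum2 sum2' mult_mat_vec_def scalar_prod_def row_def)

lemma qf4:
  assumes "v \<in> carrier_vec 4" "P \<in> carrier_mat 4 4"
  shows "(\<Sum>i<4. cnj (v $ i) * (P *\<^sub>v v) $ i) =
    cnj (v$0) * (P$$(0,0) * v$0 + P$$(0,1) * v$1 + P$$(0,2) * v$2 + P$$(0,3) * v$3)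
  + cnj (v$1) * (P$$(1,0) * v$0 + P$$(1,1) * v$1 + P$$(1,2) * v$2 + P$$(1,3) * v$3)
  + cnj (v$2) * (P$$(2,0) * v$0 + P$$(2,1) * v$1 + P$$(2,2) * v$2 + P$$(2,3) * v$3)
  + cnj (v$3) * (P$$(3,0) * v$0 + P$$(3,1) * v$1 + P$$(3,2) * v$2 + P$$(3,3) * v$3)"
  using assms by (simp add: sum4 sum4' mult_mat_vec_def scalar_prod_def row_def)

definition half :: "complex mat" where
  "half = mat 2 2 (\<lambda>(i,j). if i = j then 1/2 else 0)"

definition bell :: "complex mat" where
  "bell = mat (2*2) (2*2) (\<lambda>(i,j). if (i = 0 \<or> i = 3) \<and> (j = 0 \<or> j = 3) then 1/2 else 0)"

lemma half_pos: "cpositive 2 half"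
  unfolding cpositive_def Let_def
proof (intro conjI ballI)
  show "half \<in> carrier_mat 2 2" unfolding half_def by simp
  fix v :: "complex vec" assume v: "v \<in> carrier_vec 2"
  have e: "(\<Sum>i<2. cnj (v $ i) * (half *\<^sub>v v) $ i) = 1/2 * (cnj (v$0) * v$0 + cnj (v$1) * v$1)"
    unfolding qf2[OF v, of half, OF \<open>half \<in> carrier_mat 2 2\<close>] by (simp add: half_def algebra_simps)
  show "Im (\<Sum>i<2. cnj (v $ i) * (half *\<^sub>v v) $ i) = 0" unfolding e by simp
  show "Re (\<Sum>i<2. cnj (v $ i) * (half *\<^sub>v v) $ i) \<ge> 0" unfolding e by simp
qed

lemma half_state: "is_state 2 half"
  unfolding is_state_def trace_def using half_pos by (simp add: half_def sum2)

lemma pr_carrier: "pr m \<in> carrier_mat 2 2" unfolding pr_def by simp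

lemma pr_pos: "m < 4 \<Longrightarrow> cpositive 2 (pr m)"
  unfolding cpositive_def Let_def
proof (intro conjI ballI)
  assume m: "m < 4"
  show "pr m \<in> carrier_mat 2 2" by (rule pr_carrier)
  fix v :: "complex vec" assume v: "v \<in> carrier_vec 2"
  define a where "a = v$0"
  define b where "b = v$1"
  have e0: "(\<Sum>i<2. cnj (v $ i) * (pr m *\<^sub>v v) $ i) =
     (if m = 0 then cnj a * a else if m = 1 then cnj b * b else if m = 2 then 1/2 * (cnj (a+b) * (a+b))
      else 1/2 * (cnj (a-b) * (a-b)))"
    unfolding qf2[OF v pr_carrier] a_def[symmetric] b_def[symmetric]
    by (simp add: pr_def algebra_simps)
  have cc: "cnj z * z = complex_of_real ((Re z)^2 + (Im z)^2)" for z :: complex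
    by (simp add: complex_eq_iff power2_eq_square)
  have e: "(\<Sum>i<2. cnj (v $ i) * (pr m *\<^sub>v v) $ i) = complex_of_real
     (if m = 0 then (Re a)^2 + (Im a)^2 else if m = 1 then (Re b)^2 + (Im b)^2
      else if m = 2 then 1/2 * ((Re (a+b))^2 + (Im (a+b))^2)
      else 1/2 * ((Re (a-b))^2 + (Im (a-b))^2))"
    unfolding e0 cc by simp
  show "Im (\<Sum>i<2. cnj (v $ i) * (pr m *\<^sub>v v) $ i) = 0" unfolding e by simp
  show "Re (\<Sum>i<2. cnj (v $ i) * (pr m *\<^sub>v v) $ i) \<ge> 0" unfolding e Re_complex_of_real by simp
qed

lemma cc: "cnj z * z = complex_of_real ((Re z)^2 + (Im z)^2)" for z :: complex
  by (simp add: complex_eq_iff power2_eq_square)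

lemma Aop_pos: "cpositive (2*2) Aop"
  unfolding cpositive_def Let_def
proof (intro conjI ballI)
  show "Aop \<in> carrier_mat (2*2) (2*2)" using Aop_carrier by simp
  fix v :: "complex vec" assume v0: "v \<in> carrier_vec (2*2)"
  then have v: "v \<in> carrier_vec 4" by simp
  define a where "a = v$0"
  define b where "b = v$1"
  define c where "c = v$2"
  define d where "d = v$3"
  have e0: "(\<Sum>i<4. cnj (v $ i) * (Aop *\<^sub>v v) $ i) =
     cnj a * a + cnj d * d + 1/2 * (cnj (a+d) * (a+d)) + 1/2 * (cnj (b+c) * (b+c))"
    unfolding qf4[OF v Aop_carrier] a_def[symmetric] b_def[symmetric] c_def[symmetric] d_def[symmetric]
    by (simp add: Aop_entry algebra_simps)
  have e: "(\<Sum>i<2*2. cnj (v $ i) * (Aop *\<^sub>v v) $ i) = complex_of_real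
     ((Re a)^2 + (Im a)^2 + ((Re d)^2 + (Im d)^2) + 1/2 * ((Re (a+d))^2 + (Im (a+d))^2)
      + 1/2 * ((Re (b+c))^2 + (Im (b+c))^2))"
    using e0 unfolding cc by simp
  show "Im (\<Sum>i<2*2. cnj (v $ i) * (Aop *\<^sub>v v) $ i) = 0" unfolding e by simp
  show "Re (\<Sum>i<2*2. cnj (v $ i) * (Aop *\<^sub>v v) $ i) \<ge> 0" unfolding e Re_complex_of_real by simp
qed

lemma bell_carrier: "bell \<in> carrier_mat 4 4" unfolding bell_def by simp

lemma bell_pos: "cpositive (2*2) bell"
  unfolding cpositive_def Let_def
proof (intro conjI ballI)
  show "bell \<in> carrier_mat (2*2) (2*2)" using bell_carrier by simp
  fix v :: "complex vec" assume v0: "v \<in> carrier_vec (2*2)"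
  then have v: "v \<in> carrier_vec 4" by simp
  define a where "a = v$0"
  define d where "d = v$3"
  have e0: "(\<Sum>i<4. cnj (v $ i) * (bell *\<^sub>v v) $ i) = 1/2 * (cnj (a+d) * (a+d))"
    unfolding qf4[OF v bell_carrier] a_def[symmetric] d_def[symmetric]
    by (simp add: bell_def algebra_simps)
  have e: "(\<Sum>i<2*2. cnj (v $ i) * (bell *\<^sub>v v) $ i) = complex_of_real
     (1/2 * ((Re (a+d))^2 + (Im (a+d))^2))"
    using e0 unfolding cc by simp
  show "Im (\<Sum>i<2*2. cnj (v $ i) * (bell *\<^sub>v v) $ i) = 0" unfolding e by simp
  show "Re (\<Sum>i<2*2. cnj (v $ i) * (bell *\<^sub>v v) $ i) \<ge> 0" unfolding e Re_complex_of_real by simp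
qed

lemma tr_bell: "trace bell = 1"
  unfolding trace_def using bell_carrier by (simp add: sum4 bell_def)

lemma tr_Abell: "trace (Aop * bell) = 2"
proof -
  have "trace (Aop * bell) = 3/2*(bell$$(0,0)+bell$$(3,3)) + 1/2*(bell$$(1,1)+bell$$(2,2))
      + 1/2*(bell$$(3,0)+bell$$(0,3)+bell$$(2,1)+bell$$(1,2))"
    using Aop_carrier bell_carrier unfolding trace_def
    by (simp add: sum4 sum4' scalar_prod_def Aop_entry algebra_simps)
  then show ?thesis by (simp add: bell_def)
qed

lemma bell_not_sep: "\<not> separable 2 2 bell"
proof
  assume "separable 2 2 bell"
  then obtain K :: nat and P Q where "\<forall>m<K. cpositive 2 (P m) \<and> cpositive 2 (Q m)"
     "bell = mat (2*2) (2*2) (\<lambda>ij. \<Sum>m<K. kron 2 2 (P m) (Q m) $$ ij)"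
    unfolding separable_def by meson
  from sep_bound[OF this] show False by (simp add: tr_Abell tr_bell)
qed

lemma ptr2: "ptrace2 2 2 bell = half"
  by (rule eq_matI) (auto simp: ptrace2_def half_def bell_def sum2 less2)

lemma ptr1: "ptrace1 2 2 bell = half"
  by (rule eq_matI) (auto simp: ptrace1_def half_def bell_def sum2 less2)

lemma herm_A: "hermitian_op (2*2) Aop"
  unfolding hermitian_op_def using Aop_carrier by (auto simp: Aop_entry)

lemma sep_A: "separable 2 2 Aop"
  unfolding separable_def using Aop_pos pr_pos
  by (intro conjI exI[of _ 4] exI[of _ pr]) (auto simp: Aop_def)

theorem proposition3p10:
  shows "\<exists>(n1::nat) (n2::nat) \<rho>1 \<rho>2 A \<rho> (lam::real).
    0 < n1 \<and> 0 < n2 \<and>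
    is_state n1 \<rho>1 \<and> is_state n2 \<rho>2 \<and>
    hermitian_op (n1 * n2) A \<and> separable n1 n2 A \<and>
    is_state (n1 * n2) \<rho> \<and> entangled n1 n2 \<rho> \<and>
    lam > 0 \<and>
    lifting_witness n1 n2 \<rho>1 A \<rho>2 lam \<rho> \<and>
    (\<forall>\<sigma>. is_state (n1 * n2) \<sigma> \<and> separable n1 n2 \<sigma> \<longrightarrow>
        \<not> lifting_witness n1 n2 \<rho>1 A \<rho>2 lam \<sigma>)"
proof (rule exI[where x="2::nat"], rule exI[where x="2::nat"], rule exI[where x=half], rule exI[where x=half],
   rule exI[where x=Aop], rule exI[where x=bell], rule exI[where x="2::real"], intro conjI allI impI)
  show "is_state 2 half" by (rule half_state)
  show "hermitian_op (2*2) Aop" by (rule herm_A)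
  show "separable 2 2 Aop" by (rule sep_A)
  show "is_state (2*2) bell" unfolding is_state_def using bell_pos tr_bell by simp
  show "entangled 2 2 bell" unfolding entangled_def using bell_pos bell_not_sep by simp
  show "lifting_witness 2 2 half Aop half 2 bell"
    unfolding lifting_witness_def coupling_def is_pdo_def
    using bell_pos tr_bell ptr1 ptr2 tr_Abell by simp
  fix \<sigma> assume a: "is_state (2 * 2) \<sigma> \<and> separable 2 2 \<sigma>"
  then obtain K :: nat and P Q where "\<forall>m<K. cpositive 2 (P m) \<and> cpositive 2 (Q m)"
     "\<sigma> = mat (2*2) (2*2) (\<lambda>ij. \<Sum>m<K. kron 2 2 (P m) (Q m) $$ ij)"
    unfolding separable_def by blast
  from sep_bound[OF this] a have "Re (trace (Aop * \<sigma>)) \<le> 3/2"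
    unfolding is_state_def by simp
  then show "\<not> lifting_witness 2 2 half Aop half 2 \<sigma>"
    unfolding lifting_witness_def by simp
qed (simp_all add: half_state)

end
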